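(* For integers $t,n$, if $n<-|t-3|$ then $M_{t,n}=0$.
   Context: Let $\mathbb{N}$ be the positive integers. $M'_{t,n}$ is the cardinality of the union of the two sets $A=\{(u,v,w,k)\in\mathbb{N}^3\times\{0,1\}: u\neq w,\ v\geq 2,\ n=u+w-v-1+6k,\ (-1)^kt=2+(u+w)(1+v)+uvw\}$ and $B=\{(u,v,w,k)\in\mathbb{N}^3\times\{1,2\}: u,v,w \text{ distinct},\ n=u+v+w-3+6k,\ (-1)^kt=1+u+v+w+u(1+v)+v(1+w)+w(1+u)+(1+u)(1+v)(1+w)\}$. Define $M_{t,n}=M'_{t,n}+1$ if $t\notin\{1,3\}$ and $n\in\{t-3,-(t-3)\}$; also $M_{t,n}=M'_{t,n}+1$ if $t=1$ and $n=\pm2$, or if $t=3$ and $n=0$; and $M_{t,n}=M'_{t,n}$ otherwise. *)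

theory Defs
  imports Main
begin

definition Aset :: "int \<Rightarrow> int \<Rightarrow> (int \<times> int \<times> int \<times> int) set" where
  "Aset t n = {(u,v,w,k). u \<ge> 1 \<and> v \<ge> 1 \<and> w \<ge> 1 \<and> k \<in> {0,1} \<and>
      u \<noteq> w \<and> v \<ge> 2 \<and> n = u + w - v - 1 + 6*k \<and>
      (-1::int)^(nat k) * t = 2 + (u+w)*(1+v) + u*v*w}"

definition Bset :: "int \<Rightarrow> int \<Rightarrow> (int \<times> int \<times> int \<times> int) set" where
  "Bset t n = {(u,v,w,k). u \<ge> 1 \<and> v \<ge> 1 \<and> w \<ge> 1 \<and> k \<in> {1,2} \<and>
      u \<noteq> v \<and> v \<noteq> w \<and> u \<noteq> w \<and> n = u + v + w - 3 + 6*k \<and>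
      (-1::int)^(nat k) * t = 1 + u + v + w + u*(1+v) + v*(1+w) + w*(1+u)
                              + (1+u)*(1+v)*(1+w)}"

definition Mprime :: "int \<Rightarrow> int \<Rightarrow> nat" where
  "Mprime t n = card (Aset t n \<union> Bset t n)"

definition M :: "int \<Rightarrow> int \<Rightarrow> nat" where
  "M t n = (if (t \<notin> {1,3} \<and> n \<in> {t-3, -(t-3)}) \<or> (t = 1 \<and> n \<in> {2,-2}) \<or> (t = 3 \<and> n = 0)
            then Mprime t n + 1 else Mprime t n)"

end

theory Submission
  imports Defs
begin

lemma A_empty:
  fixes t n :: int
  assumes "n < - \<bar>t - 3\<bar>"
  shows "Aset t n = {}"
proof (rule ccontr)
  assume "Aset t n \<noteq> {}"
  then obtain u v w k where h: "u \<ge> 1" "v \<ge> 1" "w \<ge> 1" "k \<in> {0,1}"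
    "n = u + w - v - 1 + 6*k"
    "(-1::int)^(nat k) * t = 2 + (u+w)*(1+v) + u*v*w"
    unfolding Aset_def by auto
  have p1: "u*v*w \<ge> v" using h by (simp add: mult_le_cancel_right1 mult_right_mono order_trans) 
  have p2: "(u+w)*(1+v) \<ge> 0" using h by simp
  have "t = 2 + (u+w)*(1+v) + u*v*w \<or> t = -(2 + (u+w)*(1+v) + u*v*w)"
    using h(4,6) by auto
  moreover have "n \<ge> u + w - v - 1" using h(4,5) by auto
  moreover have "u + w \<ge> 2" using h by simp
  ultimately show False using assms p1 p2
    by (smt (verit))
qed

lemma B_empty:
  fixes t n :: int
  assumes "n < - \<bar>t - 3\<bar>"
  shows "Bset t n = {}"
  using assms unfolding Bset_def by auto

theorem proposition4p2:
  fixes t n :: int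
  assumes "n < - \<bar>t - 3\<bar>"
  shows "M t n = 0"
  using A_empty[OF assms] B_empty[OF assms] assms
  unfolding M_def Mprime_def by auto

end
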